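(* There exists a closed, non-separable linear subspace $M\subset\ell^\infty$ such that every non-zero $x\in M$ has exactly countably infinitely many accumulation points, i.e. $M\subset L(\omega)\cup\{0\}$.
   Context: $\ell^\infty$ is the Banach space of bounded real sequences with the sup norm. For $x\in\ell^\infty$, $L_x$ denotes the set of accumulation points (subsequential limits) of $x$. $\omega$ denotes the cardinality of $\mathbb{N}$, and $L(\omega)=\{x\in\ell^\infty: |L_x|=\omega\}$. *)

theory Defs
  imports "HOL-Analysis.Analysis"
begin

text \<open>ell-infinity is modelled as the Banach space of bounded (continuous) functions
  (nat, real) bcontfun with the sup norm (nat carries the discrete topology).\<close>

type_synonym linf = "nat \<Rightarrow>\<^sub>C real"

definition acc_points :: "linf \<Rightarrow> real set" where
  "acc_points x = {a. \<exists>r. strict_mono r \<and> (\<lambda>n. apply_bcontfun x (r n)) \<longlonglongrightarrow> a}"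

definition L_omega :: "linf set" where
  "L_omega = {x. countable (acc_points x) \<and> infinite (acc_points x)}"

end

theory Submission
  imports Defs
begin


definition code :: "(nat \<Rightarrow> bool) \<Rightarrow> nat \<Rightarrow> nat" where
  "code b n = to_nat (map b [0..<n])"

definition br :: "(nat \<Rightarrow> bool) \<Rightarrow> nat set" where
  "br b = range (code b)"

definition idx :: "nat \<Rightarrow> nat \<Rightarrow> nat \<Rightarrow> nat" where
  "idx n m k = prod_encode (n, prod_encode (m, k))"

lemma code_eq: assumes "code b n = code c m" shows "n = m" "\<And>i. i < n \<Longrightarrow> b i = c i"
proof -
  from assms have e: "map b [0..<n] = map c [0..<m]" by (simp add: code_def)
  then have "length (map b [0..<n]) = length (map c [0..<m])" by simp
  then show nm: "n = m" by simp
  fix i assume "i < n"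
  then have "map b [0..<n] ! i = map c [0..<m] ! i" using e by simp
  then show "b i = c i" using \<open>i < n\<close> nm by simp
qed

lemma code_notin: assumes "b i \<noteq> c i" "i < n" shows "code b n \<notin> br c"
  using assms code_eq unfolding br_def by blast

lemma idx_surj: "\<exists>n m k. p = idx n m k"
proof -
  obtain n q where "prod_decode p = (n, q)" by (cases "prod_decode p")
  moreover obtain m k where "prod_decode q = (m, k)" by (cases "prod_decode q")
  ultimately show ?thesis unfolding idx_def
    by (metis prod_decode_inverse)
qed

lemma prod_encode_mono2: "strict_mono (\<lambda>k. prod_encode (m, k))"
  unfolding strict_mono_Suc_iff by (simp add: prod_encode_def)

lemma idx_mono: "strict_mono (idx n m)"
proof -
  have "strict_mono (\<lambda>k. prod_encode (n, prod_encode (m, k)))"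
    using prod_encode_mono2 by (metis (no_types, lifting) strict_mono_def)
  then show ?thesis unfolding idx_def by (simp add: comp_def)
qed
definition Pgood :: "(nat \<Rightarrow> real) \<Rightarrow> bool" where
  "Pgood x \<longleftrightarrow> (\<forall>b. Cauchy (\<lambda>n. x (code b n))) \<and>
     (\<forall>e>0. \<exists>B K. finite B \<and> finite K \<and> {k. e \<le> \<bar>x k\<bar>} \<subseteq> K \<union> (\<Union>b\<in>B. br b))"

lemma Pgood_add: assumes "Pgood x" "Pgood y" shows "Pgood (\<lambda>n. x n + y n)"
  unfolding Pgood_def
proof (intro conjI allI impI)
  fix b
  have "convergent (\<lambda>n. x (code b n))" "convergent (\<lambda>n. y (code b n))"
    using assms by (auto simp: Pgood_def Cauchy_convergent_iff)
  then have "convergent (\<lambda>n. x (code b n) + y (code b n))" by (rule convergent_add)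
  then show "Cauchy (\<lambda>n. x (code b n) + y (code b n))" by (simp add: Cauchy_convergent_iff)
next
  fix e :: real assume e: "e > 0"
  obtain B1 K1 where 1: "finite B1" "finite K1" "{k. e/2 \<le> \<bar>x k\<bar>} \<subseteq> K1 \<union> (\<Union>b\<in>B1. br b)"
    using assms(1) e unfolding Pgood_def by (meson half_gt_zero)
  obtain B2 K2 where 2: "finite B2" "finite K2" "{k. e/2 \<le> \<bar>y k\<bar>} \<subseteq> K2 \<union> (\<Union>b\<in>B2. br b)"
    using assms(2) e unfolding Pgood_def by (meson half_gt_zero)
  have "{k. e \<le> \<bar>x k + y k\<bar>} \<subseteq> {k. e/2 \<le> \<bar>x k\<bar>} \<union> {k. e/2 \<le> \<bar>y k\<bar>}" by auto
  also have "\<dots> \<subseteq> (K1 \<union> K2) \<union> (\<Union>b\<in>B1 \<union> B2. br b)" using 1 2 by blast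
  finally show "\<exists>B K. finite B \<and> finite K \<and> {k. e \<le> \<bar>x k + y k\<bar>} \<subseteq> K \<union> (\<Union>b\<in>B. br b)"
    using 1 2 by blast
qed

lemma Pgood_scale: assumes "Pgood x" shows "Pgood (\<lambda>n. c * x n)"
  unfolding Pgood_def
proof (intro conjI allI impI)
  fix b
  have "convergent (\<lambda>n. x (code b n))"
    using assms by (auto simp: Pgood_def Cauchy_convergent_iff)
  then have "convergent (\<lambda>n. c * x (code b n))" using convergent_mult[OF convergent_const[of c]] by blast
  then show "Cauchy (\<lambda>n. c * x (code b n))" by (simp add: Cauchy_convergent_iff)
next
  fix e :: real assume e: "e > 0"
  show "\<exists>B K. finite B \<and> finite K \<and> {k. e \<le> \<bar>c * x k\<bar>} \<subseteq> K \<union> (\<Union>b\<in>B. br b)"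
  proof (cases "c = 0")
    case True then show ?thesis using e by auto
  next
    case False
    then have "e / \<bar>c\<bar> > 0" using e by simp
    then obtain B K where 1: "finite B" "finite K" "{k. e/\<bar>c\<bar> \<le> \<bar>x k\<bar>} \<subseteq> K \<union> (\<Union>b\<in>B. br b)"
      using assms unfolding Pgood_def by meson
    have "{k. e \<le> \<bar>c * x k\<bar>} \<subseteq> {k. e/\<bar>c\<bar> \<le> \<bar>x k\<bar>}" using False
      by (auto simp: abs_mult field_simps mult.commute)
    then show ?thesis using 1 by blast
  qed
qed

lemma Pgood_limit:
  assumes "\<And>e. e > 0 \<Longrightarrow> \<exists>y. Pgood y \<and> (\<forall>n. \<bar>y n - x n\<bar> < e)"
  shows "Pgood x"
  unfolding Pgood_def
proof (intro conjI allI impI)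
  fix b
  show "Cauchy (\<lambda>n. x (code b n))"
  proof (rule metric_CauchyI)
    fix e :: real assume e: "e > 0"
    obtain y where y: "Pgood y" "\<forall>n. \<bar>y n - x n\<bar> < e/3" using assms[of "e/3"] e by auto
    then have "Cauchy (\<lambda>n. y (code b n))" by (simp add: Pgood_def)
    then obtain N where N: "\<forall>m\<ge>N. \<forall>n\<ge>N. dist (y (code b m)) (y (code b n)) < e/3"
      using e by (meson metric_CauchyD zero_less_divide_iff zero_less_numeral)
    show "\<exists>N. \<forall>m\<ge>N. \<forall>n\<ge>N. dist (x (code b m)) (x (code b n)) < e"
    proof (intro exI allI impI)
      fix m n assume "m \<ge> N" "n \<ge> N"
      then have "\<bar>y (code b m) - y (code b n)\<bar> < e/3" using N by (simp add: dist_real_def)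
      moreover have "\<bar>y (code b m) - x (code b m)\<bar> < e/3" "\<bar>y (code b n) - x (code b n)\<bar> < e/3" using y by auto
      ultimately show "dist (x (code b m)) (x (code b n)) < e" unfolding dist_real_def by linarith
    qed
  qed
next
  fix e :: real assume e: "e > 0"
  obtain y where y: "Pgood y" "\<forall>n. \<bar>y n - x n\<bar> < e/2" using assms[of "e/2"] e by auto
  obtain B K where 1: "finite B" "finite K" "{k. e/2 \<le> \<bar>y k\<bar>} \<subseteq> K \<union> (\<Union>b\<in>B. br b)"
    using y(1) e unfolding Pgood_def by (meson half_gt_zero)
  have "{k. e \<le> \<bar>x k\<bar>} \<subseteq> {k. e/2 \<le> \<bar>y k\<bar>}"
  proof
    fix k assume "k \<in> {k. e \<le> \<bar>x k\<bar>}"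
    then show "k \<in> {k. e/2 \<le> \<bar>y k\<bar>}" using y(2)[rule_format, of k] by (auto simp: abs_if split: if_splits)
  qed
  then show "\<exists>B K. finite B \<and> finite K \<and> {k. e \<le> \<bar>x k\<bar>} \<subseteq> K \<union> (\<Union>b\<in>B. br b)"
    using 1 by blast
qed

lemma limpt_Cauchy:
  fixes s :: "nat \<Rightarrow> real"
  assumes "Cauchy s" "c islimpt range s"
  shows "c = lim s"
proof (rule ccontr)
  assume ne: "c \<noteq> lim s"
  have "s \<longlonglongrightarrow> lim s" using assms(1) by (simp add: Cauchy_convergent_iff convergent_LIMSEQ_iff)
  define e where "e = dist c (lim s) / 2"
  have e: "e > 0" using ne by (simp add: e_def)
  then obtain N where N: "\<forall>n\<ge>N. dist (s n) (lim s) < e"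
    using \<open>s \<longlonglongrightarrow> lim s\<close> by (meson LIMSEQ_iff_nz dist_real_def lim_sequentially)
  have "{n. s n \<in> ball c e} \<subseteq> {..<N}"
  proof
    fix n assume "n \<in> {n. s n \<in> ball c e}"
    then have "dist c (s n) < e" by simp
    moreover have "dist c (lim s) \<le> dist c (s n) + dist (s n) (lim s)" by (rule dist_triangle)
    ultimately have "\<not> dist (s n) (lim s) < e" unfolding e_def by linarith
    then show "n \<in> {..<N}" using N using not_less by auto
  qed
  then have "finite {n. s n \<in> ball c e}" using finite_subset by blast
  then have "finite (s ` {n. s n \<in> ball c e})" by simp
  moreover have "range s \<inter> ball c e = s ` {n. s n \<in> ball c e}" by auto
  ultimately show False using assms(2) e unfolding islimpt_eq_infinite_ball by metis
qed
lemma Pgood_countable: assumes P: "Pgood x" shows "countable (closure (range x))"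
proof -
  have "\<forall>j. \<exists>B K. finite B \<and> finite K \<and> {k. 1/real (Suc j) \<le> \<bar>x k\<bar>} \<subseteq> K \<union> (\<Union>b\<in>B. br b)"
    using P unfolding Pgood_def by simp
  then obtain BB where "\<forall>j. \<exists>K. finite (BB j) \<and> finite K \<and> {k. 1/real (Suc j) \<le> \<bar>x k\<bar>} \<subseteq> K \<union> (\<Union>b\<in>BB j. br b)"
    using choice[of "\<lambda>j B. \<exists>K. finite B \<and> finite K \<and> {k. 1/real (Suc j) \<le> \<bar>x k\<bar>} \<subseteq> K \<union> (\<Union>b\<in>B. br b)"] by blast
  then obtain KK where "\<forall>j. finite (BB j) \<and> finite (KK j) \<and> {k. 1/real (Suc j) \<le> \<bar>x k\<bar>} \<subseteq> KK j \<union> (\<Union>b\<in>BB j. br b)"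
    using choice[of "\<lambda>j K. finite (BB j) \<and> finite K \<and> {k. 1/real (Suc j) \<le> \<bar>x k\<bar>} \<subseteq> K \<union> (\<Union>b\<in>BB j. br b)"] by blast
  then have BK: "\<And>j. finite (BB j)" "\<And>j. finite (KK j)"
      "\<And>j. {k. 1/real (Suc j) \<le> \<bar>x k\<bar>} \<subseteq> KK j \<union> (\<Union>b\<in>BB j. br b)"
    by auto
  define L where "L b = lim (\<lambda>n. x (code b n))" for b
  have lim: "{c. c islimpt range x} \<subseteq> insert 0 (\<Union>j. L ` BB j)"
  proof
    fix c assume "c \<in> {c. c islimpt range x}"
    then have c: "c islimpt range x" by simp
    show "c \<in> insert 0 (\<Union>j. L ` BB j)"
    proof (cases "c = 0")
      case True then show ?thesis by simp
    next
      case False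
      then have ca: "\<bar>c\<bar> / 2 > 0" by simp
      obtain j where j: "2 / \<bar>c\<bar> < real j" using reals_Archimedean2 by blast
      have jc: "1 / real (Suc j) < \<bar>c\<bar> / 2"
      proof -
        have "2 < \<bar>c\<bar> * real j" using j False by (simp add: field_simps)
        moreover have "\<bar>c\<bar> * real j \<le> \<bar>c\<bar> * real (Suc j)" by (intro mult_left_mono) auto
        ultimately have "2 < \<bar>c\<bar> * real (Suc j)" by linarith
        then show ?thesis using False by (simp add: field_simps)
      qed
      have c2: "c islimpt (range x \<inter> {w. \<bar>c\<bar>/2 < \<bar>w\<bar>})"
        unfolding islimpt_approachable
      proof (intro allI impI)
        fix e :: real assume "e > 0"
        then obtain w where w: "w \<in> range x" "w \<noteq> c" "dist w c < min e (\<bar>c\<bar>/2)"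
          using c ca unfolding islimpt_approachable by (meson min_less_iff_conj)
        then have "\<bar>c\<bar>/2 < \<bar>w\<bar>" using abs_triangle_ineq2[of c w] abs_minus_commute[of w c]
          by (simp add: dist_real_def)
        then show "\<exists>x'\<in>range x \<inter> {w. \<bar>c\<bar> / 2 < \<bar>w\<bar>}. x' \<noteq> c \<and> dist x' c < e"
          using w by auto
      qed
      have "range x \<inter> {w. \<bar>c\<bar>/2 < \<bar>w\<bar>} \<subseteq> x ` KK j \<union> (\<Union>b\<in>BB j. range (\<lambda>n. x (code b n)))"
      proof
        fix w assume "w \<in> range x \<inter> {w. \<bar>c\<bar>/2 < \<bar>w\<bar>}"
        then obtain k where k: "w = x k" "\<bar>c\<bar>/2 < \<bar>x k\<bar>" by auto
        then have "1/real (Suc j) \<le> \<bar>x k\<bar>" using jc by linarith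
        then have "k \<in> KK j \<union> (\<Union>b\<in>BB j. br b)" using BK(3)[of j] by blast
        then show "w \<in> x ` KK j \<union> (\<Union>b\<in>BB j. range (\<lambda>n. x (code b n)))"
          using k unfolding br_def by auto
      qed
      then have "c islimpt (x ` KK j \<union> (\<Union>b\<in>BB j. range (\<lambda>n. x (code b n))))"
        by (rule islimpt_subset[OF c2])
      then have "c islimpt (\<Union>b\<in>BB j. range (\<lambda>n. x (code b n)))"
        by (simp add: islimpt_Un_finite BK(2))
      then have "\<exists>b\<in>BB j. c islimpt range (\<lambda>n. x (code b n))"
        by (simp add: islimpt_finite_union_iff BK(1))
      then obtain b where b: "b \<in> BB j" "c islimpt range (\<lambda>n. x (code b n))" by blast
      have "Cauchy (\<lambda>n. x (code b n))" using P by (simp add: Pgood_def)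
      then have "c = L b" using limpt_Cauchy b(2) unfolding L_def by blast
      then show ?thesis using b(1) by blast
    qed
  qed
  have "countable (insert 0 (\<Union>j. L ` BB j))" using BK(1) by (simp add: countable_finite)
  then have "countable {c. c islimpt range x}" by (rule countable_subset[OF lim])
  then show ?thesis unfolding closure_def by simp
qed


definition Mset :: "linf set" where
  "Mset = {z. Pgood (\<lambda>n. apply_bcontfun z (idx n 0 0)) \<and>
     (\<forall>n m k. apply_bcontfun z (idx n m k) = apply_bcontfun z (idx n 0 0) / real (Suc m))}"

lemma Cauchy_const_real: "Cauchy (\<lambda>n. c :: real)"
  by (simp add: Cauchy_convergent_iff convergent_const)

lemma Pgood_zero: "Pgood (\<lambda>n. 0)"
  unfolding Pgood_def by (auto simp: Cauchy_const_real)

lemma MsetD: "z \<in> Mset \<Longrightarrow> Pgood (\<lambda>n. apply_bcontfun z (idx n 0 0))"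
  "z \<in> Mset \<Longrightarrow> apply_bcontfun z (idx n m k) = apply_bcontfun z (idx n 0 0) / real (Suc m)"
  unfolding Mset_def by blast+

lemma MsetI: "Pgood (\<lambda>n. apply_bcontfun z (idx n 0 0)) \<Longrightarrow>
  (\<And>n m k. apply_bcontfun z (idx n m k) = apply_bcontfun z (idx n 0 0) / real (Suc m)) \<Longrightarrow> z \<in> Mset"
  unfolding Mset_def by blast

lemma Mset_subspace: "subspace Mset"
  unfolding subspace_def
proof (intro conjI ballI allI)
  show "0 \<in> Mset" by (rule MsetI) (simp_all add: Pgood_zero)
next
  fix x y assume x: "x \<in> Mset" and y: "y \<in> Mset"
  show "x + y \<in> Mset"
  proof (rule MsetI)
    show "Pgood (\<lambda>n. apply_bcontfun (x + y) (idx n 0 0))"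
      using Pgood_add[OF MsetD(1)[OF x] MsetD(1)[OF y]] by simp
    fix n m k
    show "apply_bcontfun (x + y) (idx n m k) = apply_bcontfun (x + y) (idx n 0 0) / real (Suc m)"
      unfolding plus_bcontfun.rep_eq MsetD(2)[OF x, of n m k] MsetD(2)[OF y, of n m k]
      by (simp add: add_divide_distrib)
  qed
next
  fix c :: real and x assume x: "x \<in> Mset"
  show "c *\<^sub>R x \<in> Mset"
  proof (rule MsetI)
    show "Pgood (\<lambda>n. apply_bcontfun (c *\<^sub>R x) (idx n 0 0))"
      using Pgood_scale[OF MsetD(1)[OF x], of c] by simp
    fix n m k
    show "apply_bcontfun (c *\<^sub>R x) (idx n m k) = apply_bcontfun (c *\<^sub>R x) (idx n 0 0) / real (Suc m)"
      unfolding scaleR_bcontfun.rep_eq MsetD(2)[OF x, of n m k] by simp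
  qed
qed

lemma eval_tendsto:
  fixes X :: "nat \<Rightarrow> linf"
  assumes "X \<longlonglongrightarrow> l"
  shows "(\<lambda>j. apply_bcontfun (X j) p) \<longlonglongrightarrow> apply_bcontfun l p"
proof -
  have "(\<lambda>j. dist (X j) l) \<longlonglongrightarrow> 0" using assms by (rule tendsto_dist_iff[THEN iffD1])
  then have "(\<lambda>j. dist (apply_bcontfun (X j) p) (apply_bcontfun l p)) \<longlonglongrightarrow> 0"
    by (rule Lim_null_comparison[rotated]) (simp add: dist_bounded)
  then show ?thesis by (rule tendsto_dist_iff[THEN iffD2])
qed

lemma Mset_closed: "closed Mset"
  unfolding closed_sequential_limits
proof (intro allI impI, elim conjE)
  fix X :: "nat \<Rightarrow> linf" and l
  assume X: "\<forall>n. X n \<in> Mset" and lim: "X \<longlonglongrightarrow> l"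
  have P: "Pgood (\<lambda>n. apply_bcontfun l (idx n 0 0))"
  proof (rule Pgood_limit)
    fix e :: real assume "e > 0"
    then obtain N where N: "\<forall>n\<ge>N. dist (X n) l < e" using metric_LIMSEQ_D[OF lim] by blast
    show "\<exists>y. Pgood y \<and> (\<forall>n. \<bar>y n - apply_bcontfun l (idx n 0 0)\<bar> < e)"
    proof (intro exI conjI allI)
      show "Pgood (\<lambda>n. apply_bcontfun (X N) (idx n 0 0))" using MsetD(1) X by blast
      fix n
      show "\<bar>apply_bcontfun (X N) (idx n 0 0) - apply_bcontfun l (idx n 0 0)\<bar> < e"
        using dist_fun_lt_imp_dist_val_lt[of "X N" l e "idx n 0 0"] N by (simp add: dist_real_def)
    qed
  qed
  have E: "apply_bcontfun l (idx n m k) = apply_bcontfun l (idx n 0 0) / real (Suc m)" for n m k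
  proof -
    have fe: "(\<lambda>j. apply_bcontfun (X j) (idx n m k)) = (\<lambda>j. apply_bcontfun (X j) (idx n 0 0) / real (Suc m))"
      by (rule ext) (rule MsetD(2)[OF X[rule_format]])
    have t1: "(\<lambda>j. apply_bcontfun (X j) (idx n m k)) \<longlonglongrightarrow> apply_bcontfun l (idx n m k)"
      by (rule eval_tendsto[OF lim])
    have t2: "(\<lambda>j. apply_bcontfun (X j) (idx n 0 0) / real (Suc m)) \<longlonglongrightarrow> apply_bcontfun l (idx n 0 0) / real (Suc m)"
      by (rule tendsto_divide[OF eval_tendsto[OF lim] tendsto_const]) simp
    from t1 have t1': "(\<lambda>j. apply_bcontfun (X j) (idx n 0 0) / real (Suc m)) \<longlonglongrightarrow> apply_bcontfun l (idx n m k)"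
      unfolding fe .
    from LIMSEQ_unique[OF t1' t2] show ?thesis .
  qed
  show "l \<in> Mset" using P E by (rule MsetI)
qed

lemma acc_sub_closure: "acc_points z \<subseteq> closure (range (apply_bcontfun z))"
proof
  fix a assume "a \<in> acc_points z"
  then obtain r where r: "(\<lambda>n. apply_bcontfun z (r n)) \<longlonglongrightarrow> a" unfolding acc_points_def by blast
  have "\<forall>n. apply_bcontfun z (r n) \<in> range (apply_bcontfun z)" by simp
  with r show "a \<in> closure (range (apply_bcontfun z))"
    by (intro closure_sequential[THEN iffD2] exI[of _ "\<lambda>n. apply_bcontfun z (r n)"]) simp
qed

lemma Mset_acc:
  assumes zM: "z \<in> Mset" and nz: "z \<noteq> 0"
  shows "z \<in> L_omega"
proof -
  define x where "x n = apply_bcontfun z (idx n 0 0)" for n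
  have Px: "Pgood x" using MsetD(1)[OF zM] unfolding x_def .
  have eq: "apply_bcontfun z (idx n m k) = x n / real (Suc m)" for n m k
    using MsetD(2)[OF zM] unfolding x_def by blast
  have zp: "\<exists>n m. apply_bcontfun z p = x n / real (Suc m)" for p
    using idx_surj[of p] eq by metis
  define Bd where "Bd = norm z"
  have xb: "\<bar>x n\<bar> \<le> Bd" for n unfolding x_def Bd_def using norm_bounded[of z] by simp
  have Pm: "Pgood (\<lambda>n. x n / real (Suc m))" for m
    using Pgood_scale[OF Px, of "1 / real (Suc m)"] by simp
  have cl: "closure (range (apply_bcontfun z)) \<subseteq> insert 0 (\<Union>m. closure (range (\<lambda>n. x n / real (Suc m))))"
  proof
    fix a assume a: "a \<in> closure (range (apply_bcontfun z))"
    show "a \<in> insert 0 (\<Union>m. closure (range (\<lambda>n. x n / real (Suc m))))"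
    proof (cases "a = 0")
      case True then show ?thesis by simp
    next
      case False
      obtain M where M: "2 * Bd / \<bar>a\<bar> < real M" using reals_Archimedean2 by blast
      define S where "S = range (apply_bcontfun z) \<inter> {w. \<bar>a\<bar>/2 < \<bar>w\<bar>}"
      have aS: "a \<in> closure S" unfolding closure_approachable
      proof (intro allI impI)
        fix e :: real assume "e > 0"
        then have "min e (\<bar>a\<bar>/2) > 0" using False by simp
        then obtain w where w: "w \<in> range (apply_bcontfun z)" "dist w a < min e (\<bar>a\<bar>/2)"
          using a unfolding closure_approachable by blast
        then have "\<bar>a\<bar>/2 < \<bar>w\<bar>" using abs_triangle_ineq2[of a w] abs_minus_commute[of w a]
          by (simp add: dist_real_def)
        then show "\<exists>y\<in>S. dist y a < e" using w unfolding S_def by auto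
      qed
      have Ssub: "S \<subseteq> (\<Union>m\<in>{..<M}. range (\<lambda>n. x n / real (Suc m)))"
      proof
        fix w assume "w \<in> S"
        then obtain p where p: "w = apply_bcontfun z p" "\<bar>a\<bar>/2 < \<bar>w\<bar>" unfolding S_def by auto
        obtain n m where nm: "apply_bcontfun z p = x n / real (Suc m)" using zp by blast
        have "m < M"
        proof (rule ccontr)
          assume "\<not> m < M"
          then have "real M \<le> real (Suc m)" by simp
          then have "2 * Bd / \<bar>a\<bar> < real (Suc m)" using M by linarith
          then have "2 * Bd < real (Suc m) * \<bar>a\<bar>" using False by (simp add: field_simps)
          moreover have "\<bar>w\<bar> \<le> Bd / real (Suc m)" using p nm xb[of n]
            by (simp add: divide_right_mono)
          moreover have "\<bar>w\<bar> * real (Suc m) \<le> Bd" using \<open>\<bar>w\<bar> \<le> Bd / real (Suc m)\<close>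
            by (simp add: field_simps)
          ultimately have "(2 * \<bar>w\<bar>) * real (Suc m) < \<bar>a\<bar> * real (Suc m)" by (simp add: algebra_simps)
          then have "2 * \<bar>w\<bar> < \<bar>a\<bar>" by (rule mult_right_less_imp_less) simp
          then have "\<bar>w\<bar> < \<bar>a\<bar> / 2" by simp
          then show False using p by linarith
        qed
        then show "w \<in> (\<Union>m\<in>{..<M}. range (\<lambda>n. x n / real (Suc m)))" using p nm by auto
      qed
      have "a \<in> closure (\<Union>m\<in>{..<M}. range (\<lambda>n. x n / real (Suc m)))"
        using closure_mono[OF Ssub] aS by (rule subsetD)
      then have "a \<in> (\<Union>m\<in>{..<M}. range (\<lambda>n. x n / real (Suc m))) \<or> a islimpt (\<Union>m\<in>{..<M}. range (\<lambda>n. x n / real (Suc m)))"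
        unfolding closure_def by simp
      then have "\<exists>m. a \<in> range (\<lambda>n. x n / real (Suc m)) \<or> a islimpt range (\<lambda>n. x n / real (Suc m))"
      proof
        assume "a \<in> (\<Union>m\<in>{..<M}. range (\<lambda>n. x n / real (Suc m)))"
        then show ?thesis by blast
      next
        assume "a islimpt (\<Union>m\<in>{..<M}. range (\<lambda>n. x n / real (Suc m)))"
        then have "\<exists>m\<in>{..<M}. a islimpt range (\<lambda>n. x n / real (Suc m))"
          by (simp add: islimpt_finite_union_iff)
        then show ?thesis by blast
      qed
      then obtain m where "a \<in> range (\<lambda>n. x n / real (Suc m)) \<or> a islimpt range (\<lambda>n. x n / real (Suc m))"
        by blast
      then have "a \<in> closure (range (\<lambda>n. x n / real (Suc m)))" unfolding closure_def by blast
      then show ?thesis by blast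
    qed
  qed
  have "countable (insert 0 (\<Union>m. closure (range (\<lambda>n. x n / real (Suc m)))))"
    using Pgood_countable[OF Pm] by simp
  then have "countable (closure (range (apply_bcontfun z)))" by (rule countable_subset[OF cl])
  then have C: "countable (acc_points z)" by (rule countable_subset[OF acc_sub_closure])
  obtain p where "apply_bcontfun z p \<noteq> 0"
    using nz by (metis bcontfun_eqI zero_bcontfun.rep_eq)
  moreover obtain n1 m1 where "apply_bcontfun z p = x n1 / real (Suc m1)" using zp by blast
  ultimately have n0: "x n1 \<noteq> 0" by simp
  define n0 where "n0 = n1"
  have n0: "x n0 \<noteq> 0" using n0 by (simp add: n0_def)
  have accm: "x n0 / real (Suc m) \<in> acc_points z" for m
    unfolding acc_points_def
  proof (intro CollectI exI conjI)
    show "strict_mono (idx n0 m)" by (rule idx_mono)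
    show "(\<lambda>k. apply_bcontfun z (idx n0 m k)) \<longlonglongrightarrow> x n0 / real (Suc m)"
      by (simp add: eq)
  qed
  have "inj (\<lambda>m. x n0 / real (Suc m))" using n0 by (auto simp: inj_on_def)
  then have "infinite (range (\<lambda>m. x n0 / real (Suc m)))" by (rule range_inj_infinite)
  then have "infinite (acc_points z)" using accm by (meson image_subsetI infinite_super)
  then show ?thesis using C by (simp add: L_omega_def)
qed

definition ebf :: "(nat \<Rightarrow> bool) \<Rightarrow> nat \<Rightarrow> real" where
  "ebf b p = (case prod_decode p of (n, q) \<Rightarrow> (case prod_decode q of (m, k) \<Rightarrow>
      if n \<in> br b then 1 / real (Suc m) else 0))"

lemma ebf_bcontfun: "ebf b \<in> bcontfun"
proof (rule bcontfun_normI)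
  show "continuous_on UNIV (ebf b)" by simp
  fix p
  show "norm (ebf b p) \<le> 1"
    by (auto simp: ebf_def split: prod.splits)
qed

definition eb :: "(nat \<Rightarrow> bool) \<Rightarrow> linf" where
  "eb b = Bcontfun (ebf b)"

lemma eb_idx: "apply_bcontfun (eb b) (idx n m k) = (if n \<in> br b then 1 / real (Suc m) else 0)"
  unfolding eb_def Bcontfun_inverse[OF ebf_bcontfun] by (simp add: ebf_def idx_def)

lemma eb_Pgood: "Pgood (\<lambda>n. if n \<in> br b then 1 else 0)"
  unfolding Pgood_def
proof (intro conjI allI impI)
  fix c
  show "Cauchy (\<lambda>n. if code c n \<in> br b then 1 else 0 :: real)"
  proof (cases "c = b")
    case True
    then have "(\<lambda>n. if code c n \<in> br b then 1 else 0 :: real) = (\<lambda>n. 1)" by (auto simp: br_def)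
    then show ?thesis by (simp add: Cauchy_const_real)
  next
    case False
    then obtain i where i: "c i \<noteq> b i" by blast
    show ?thesis
    proof (rule metric_CauchyI)
      fix e :: real assume "e > 0"
      show "\<exists>N. \<forall>m\<ge>N. \<forall>n\<ge>N. dist (if code c m \<in> br b then 1 else 0 :: real) (if code c n \<in> br b then 1 else 0) < e"
      proof (intro exI allI impI)
        fix m n assume "Suc i \<le> m" "Suc i \<le> n"
        then have "code c m \<notin> br b" "code c n \<notin> br b" using code_notin[of c i b] i by auto
        then show "dist (if code c m \<in> br b then 1 else 0 :: real) (if code c n \<in> br b then 1 else 0) < e"
          using \<open>e > 0\<close> by simp
      qed
    qed
  qed
next
  fix e :: real assume e: "e > 0"
  have "{k. e \<le> \<bar>if k \<in> br b then 1 else 0 :: real\<bar>} \<subseteq> {} \<union> (\<Union>b'\<in>{b}. br b')"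
    using e by auto
  then show "\<exists>B K. finite B \<and> finite K \<and> {k. e \<le> \<bar>if k \<in> br b then 1 else 0 :: real\<bar>} \<subseteq> K \<union> (\<Union>b\<in>B. br b)"
    by blast
qed

lemma eb_Mset: "eb b \<in> Mset"
proof (rule MsetI)
  have "(\<lambda>n. apply_bcontfun (eb b) (idx n 0 0)) = (\<lambda>n. if n \<in> br b then 1 else 0)"
    by (rule ext) (simp add: eb_idx)
  then show "Pgood (\<lambda>n. apply_bcontfun (eb b) (idx n 0 0))" using eb_Pgood by simp
  fix n m k
  show "apply_bcontfun (eb b) (idx n m k) = apply_bcontfun (eb b) (idx n 0 0) / real (Suc m)"
    by (simp add: eb_idx)
qed

lemma eb_dist: assumes "b \<noteq> c" shows "1 \<le> dist (eb b) (eb c)"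
proof -
  obtain i where i: "b i \<noteq> c i" using assms by blast
  have "code b (Suc i) \<notin> br c" using code_notin[of b i c] i by simp
  moreover have "code b (Suc i) \<in> br b" by (simp add: br_def)
  ultimately have "dist (apply_bcontfun (eb b) (idx (code b (Suc i)) 0 0)) (apply_bcontfun (eb c) (idx (code b (Suc i)) 0 0)) = 1"
    by (simp add: eb_idx)
  then show ?thesis using dist_bounded[of "eb b" "idx (code b (Suc i)) 0 0" "eb c"] by simp
qed

lemma uncountable_branches: "\<not> countable (UNIV :: (nat \<Rightarrow> bool) set)"
proof
  assume "countable (UNIV :: (nat \<Rightarrow> bool) set)"
  then obtain g :: "nat \<Rightarrow> (nat \<Rightarrow> bool)" where g: "range g = UNIV"
    using uncountable_def by blast
  define d where "d n = (\<not> g n n)" for n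
  obtain k where "d = g k" using g by (metis UNIV_I imageE)
  then have "d k = g k k" by simp
  then show False unfolding d_def by simp
qed

lemma Mset_nonsep: "\<not> separable_space (top_of_set Mset)"
proof
  assume "separable_space (top_of_set Mset)"
  then obtain C where C: "countable C" "C \<subseteq> Mset" "(top_of_set Mset) closure_of C = Mset"
    unfolding separable_space_def by auto
  have "Mset \<inter> closure (Mset \<inter> C) = Mset" using C(3) by (simp add: closure_of_subtopology)
  moreover have "Mset \<inter> C = C" using C(2) by blast
  ultimately have "Mset \<inter> closure C = Mset" by simp
  then have McC: "Mset \<subseteq> closure C" by (metis Int_lower2)
  have "\<exists>y. y \<in> C \<and> dist y (eb b) < 1/2" for b
  proof -
    have "eb b \<in> closure C" using McC eb_Mset by blast
    then have "\<forall>e>0. \<exists>y\<in>C. dist y (eb b) < e" by (simp only: closure_approachable)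
    then have "\<exists>y\<in>C. dist y (eb b) < 1/2" by (meson half_gt_zero zero_less_one)
    then show ?thesis by blast
  qed
  then have "\<exists>f. \<forall>b. f b \<in> C \<and> dist (f b) (eb b) < 1/2" by (rule choice[OF allI])
  then obtain f where f0: "\<forall>b. f b \<in> C \<and> dist (f b) (eb b) < 1/2" by blast
  then have f: "\<And>b. f b \<in> C" "\<And>b. dist (f b) (eb b) < 1/2" by auto
  have "inj f"
  proof (rule injI)
    fix b c assume "f b = f c"
    then have "dist (eb b) (eb c) < 1" using f(2)[of b] f(2)[of c] dist_triangle[of "eb b" "eb c" "f b"]
      by (simp add: dist_commute)
    then show "b = c" using eb_dist by (meson not_le)
  qed
  moreover have "countable (range f)" using C(1) f(1) by (meson countable_subset image_subsetI)
  ultimately show False using uncountable_branches countable_image_inj_on by blast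
qed

theorem proposition3p2:
  shows "\<exists>M :: linf set. subspace M \<and> closed M \<and>
           \<not> separable_space (top_of_set M) \<and> M \<subseteq> L_omega \<union> {0}"
proof (intro exI conjI)
  show "subspace Mset" by (rule Mset_subspace)
  show "closed Mset" by (rule Mset_closed)
  show "\<not> separable_space (top_of_set Mset)" by (rule Mset_nonsep)
  show "Mset \<subseteq> L_omega \<union> {0}" using Mset_acc by blast
qed

end
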